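(* Let $A$ be a bivariate copula and $K_A$ a version of its Markov kernel such that the function $(x,y)\mapsto K_A(x,[0,y])$ on $[0,1]^2$ has a discontinuity. Then the sequence $(\Delta_N)_{N\in\mathbb{N}}$ given by $$\Delta_N:=\sup_{(x,y)\in[0,1]^2}\left|K_{\mathcal{CB}_N(A)}(x,[0,y])-K_A(x,[0,y])\right|$$ does not converge to $0$ as $N\to\infty$.
   Context: A (bivariate) copula is a distribution function on $[0,1]^2$ with uniform marginals; each copula $B$ corresponds to a doubly stochastic measure $\mu_B$ with $B(x,y)=\mu_B([0,x]\times[0,y])$. A Markov kernel of $B$ is a map $K_B:[0,1]\times\mathcal{B}([0,1])\to[0,1]$, measurable in the first argument, a probability measure in the second, with $\int_{E_1}K_B(x,E_2)\,d\lambda(x)=\mu_B(E_1\times E_2)$ for all Borel $E_1,E_2$ ($\lambda$ = Lebesgue measure). Checkerboard approximation: $I_1^N=[0,\tfrac1N]$, $I_i^N=(\tfrac{i-1}N,\tfrac iN]$ ($i=2,\dots,N$), $Q_{i,j}^N=I_i^N\times I_j^N$; $\mathcal{CB}_N(A)$ is the absolutely continuous copula with density $N^2\sum_{i,j=1}^N\mu_A(Q^N_{i,j})\mathbf 1_{Q^N_{i,j}}$, and its Markov kernel is the version $K_{\mathcal{CB}_N(A)}(x,[0,y])=N^2\sum_{i,j=1}^N\mu_A(Q^N_{i,j})\mathbf 1_{I^N_i}(x)\,\lambda([0,y]\cap I^N_j)$. *)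

theory Defs
  imports "HOL-Analysis.Analysis"
begin

text \<open>A (bivariate) copula is identified with its doubly stochastic measure mu
  on the Borel sets of the plane: a measure concentrated on the unit square
  with uniform marginals (so B(x,y) = mu([0,x] x [0,y]) is the copula).\<close>
definition doubly_stochastic :: "(real \<times> real) measure \<Rightarrow> bool" where
  "doubly_stochastic \<mu> \<longleftrightarrow>
     sets \<mu> = sets (borel :: (real \<times> real) measure) \<and>
     emeasure \<mu> (UNIV - {0..1} \<times> {0..1}) = 0 \<and>
     (\<forall>E \<in> sets (borel :: real measure).
        emeasure \<mu> (E \<times> UNIV) = emeasure lborel (E \<inter> {0..1}) \<and>
        emeasure \<mu> (UNIV \<times> E) = emeasure lborel (E \<inter> {0..1}))"

abbreviation unit_borel :: "real measure" where
  "unit_borel \<equiv> restrict_space borel {0..1}"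

definition markov_kernel_of :: "(real \<times> real) measure \<Rightarrow> (real \<Rightarrow> real measure) \<Rightarrow> bool" where
  "markov_kernel_of \<mu> K \<longleftrightarrow>
     (\<forall>x \<in> {0..1}. sets (K x) = sets unit_borel \<and> emeasure (K x) {0..1} = 1) \<and>
     (\<forall>E \<in> sets unit_borel. (\<lambda>x. measure (K x) E) \<in> borel_measurable unit_borel) \<and>
     (\<forall>E1 \<in> sets unit_borel. \<forall>E2 \<in> sets unit_borel.
        (\<integral>\<^sup>+ x \<in> E1. ennreal (measure (K x) E2) \<partial>lborel) = emeasure \<mu> (E1 \<times> E2))"

definition cb_I :: "nat \<Rightarrow> nat \<Rightarrow> real set" where
  "cb_I N i = (if i = 1 then {0..1 / real N} else {(real i - 1) / real N <.. real i / real N})"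

definition cb_Q :: "nat \<Rightarrow> nat \<Rightarrow> nat \<Rightarrow> (real \<times> real) set" where
  "cb_Q N i j = cb_I N i \<times> cb_I N j"

text \<open>The stated version of the Markov kernel of CB_N(A), evaluated at (x,[0,y]).\<close>
definition cb_kernel :: "(real \<times> real) measure \<Rightarrow> nat \<Rightarrow> real \<Rightarrow> real \<Rightarrow> real" where
  "cb_kernel \<mu> N x y =
     (real N)\<^sup>2 * (\<Sum>i = 1..N. \<Sum>j = 1..N.
        measure \<mu> (cb_Q N i j) * indicator (cb_I N i) x * measure lborel ({0..y} \<inter> cb_I N j))"

definition cb_Delta :: "(real \<times> real) measure \<Rightarrow> (real \<Rightarrow> real measure) \<Rightarrow> nat \<Rightarrow> real" where
  "cb_Delta \<mu> K N =
     (SUP p \<in> {0..1} \<times> {0..1}. \<bar>cb_kernel \<mu> N (fst p) (snd p) - measure (K (fst p)) {0..snd p}\<bar>)"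

end

theory Submission
  imports Defs
begin

lemma meas_Ioc: "0 \<le> (a::real) \<Longrightarrow> measure lborel ({0..y} \<inter> {a<..b}) = max 0 (min y b - a)"
proof -
  assume a: "0 \<le> a"
  have "{0..y} \<inter> {a<..b} = {a<..min y b}" using a by auto
  then show ?thesis by (cases "a \<le> min y b") auto
qed

lemma meas_Icc: "0 \<le> (b::real) \<Longrightarrow> measure lborel ({0..y} \<inter> {0..b}) = max 0 (min y b)"
proof -
  assume a: "0 \<le> b"
  have "{0..y} \<inter> {0..b} = {0..min y b}" using a by auto
  then show ?thesis by (cases "0 \<le> min y b") auto
qed

definition gfun :: "nat \<Rightarrow> nat \<Rightarrow> real \<Rightarrow> real" where
  "gfun N j y = (if j = 1 then max 0 (min y (1 / real N)) else max 0 (min y (real j / real N) - (real j - 1) / real N))"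

lemma meas_cb: "j \<ge> 1 \<Longrightarrow> measure lborel ({0..y} \<inter> cb_I N j) = gfun N j y"
proof (cases "j = 1")
  case True then show ?thesis unfolding cb_I_def gfun_def by (simp add: meas_Icc)
next
  case False
  assume "j \<ge> 1"
  then have "0 \<le> (real j - 1) / real N" by simp
  with False show ?thesis unfolding cb_I_def gfun_def by (simp add: meas_Ioc)
qed

lemma gfun_cont: "continuous_on UNIV (gfun N j)"
  unfolding gfun_def by (cases "j = 1") (auto intro!: continuous_intros)

lemma gfun_bnd: "0 \<le> y \<Longrightarrow> y \<le> 1 \<Longrightarrow> j \<ge> 1 \<Longrightarrow> gfun N j y \<le> 1 \<and> 0 \<le> gfun N j y"
proof -
  assume "0 \<le> y" "y \<le> 1" "j \<ge> 1"
  moreover have "0 \<le> (real j - 1) / real N" using \<open>j \<ge> 1\<close> by simp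
  moreover have "min y b \<le> y" for b by simp
  ultimately show ?thesis unfolding gfun_def by (smt (verit))
qed

lemma cb_alt: "cb_kernel \<mu> N x y = (real N)\<^sup>2 * (\<Sum>i = 1..N. \<Sum>j = 1..N.
        measure \<mu> (cb_Q N i j) * indicator (cb_I N i) x * gfun N j y)"
  unfolding cb_kernel_def by (intro arg_cong2[where f="(*)"] refl sum.cong) (auto simp: meas_cb)

lemma cb_cont: "continuous_on UNIV (cb_kernel \<mu> N x)"
  unfolding cb_alt[abs_def] by (intro continuous_intros gfun_cont[THEN continuous_on_subset]) auto

lemma cb_bnd: "0 \<le> y \<Longrightarrow> y \<le> 1 \<Longrightarrow> \<bar>cb_kernel \<mu> N x y\<bar> \<le> (real N)\<^sup>2 * (\<Sum>i = 1..N. \<Sum>j = 1..N. measure \<mu> (cb_Q N i j))"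
proof -
  assume y: "0 \<le> y" "y \<le> 1"
  have "0 \<le> cb_kernel \<mu> N x y" unfolding cb_alt
    using gfun_bnd[OF y] by (intro mult_nonneg_nonneg sum_nonneg) auto
  moreover have "cb_kernel \<mu> N x y \<le> (real N)\<^sup>2 * (\<Sum>i = 1..N. \<Sum>j = 1..N. measure \<mu> (cb_Q N i j))"
    unfolding cb_alt
  proof (intro mult_left_mono sum_mono)
    fix i j assume j: "j \<in> {1..N}"
    have "indicator (cb_I N i) x * gfun N j y \<le> 1"
      using gfun_bnd[OF y, of j] j by (auto simp: indicator_def)
    moreover have "0 \<le> indicator (cb_I N i) x * gfun N j y"
      using gfun_bnd[OF y, of j] j by (auto simp: indicator_def)
    ultimately show "measure \<mu> (cb_Q N i j) * indicator (cb_I N i) x * gfun N j y \<le> measure \<mu> (cb_Q N i j)"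
      by (metis measure_nonneg mult.assoc mult_left_le)
  qed auto
  ultimately show ?thesis by simp
qed

lemma cell: "N \<ge> 1 \<Longrightarrow> 0 \<le> x \<Longrightarrow> x \<le> 1 \<Longrightarrow> i \<in> {1..N} \<Longrightarrow> x \<in> cb_I N i \<longleftrightarrow> int i = max 1 \<lceil>real N * x\<rceil>"
proof -
  assume N: "N \<ge> 1" and x: "0 \<le> x" "x \<le> 1" and i: "i \<in> {1..N}"
  have Np: "real N > 0" using N by simp
  show ?thesis
  proof (cases "i = 1")
    case True
    have "x \<le> 1 / real N \<longleftrightarrow> real N * x \<le> 1" using Np by (simp add: field_simps)
    also have "\<dots> \<longleftrightarrow> \<lceil>real N * x\<rceil> \<le> 1" by (metis ceiling_le_iff of_int_1)
    finally have "x \<le> 1 / real N \<longleftrightarrow> int 1 = max 1 \<lceil>real N * x\<rceil>" by linarith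
    then show ?thesis using True x unfolding cb_I_def by auto
  next
    case False
    have "x \<in> cb_I N i \<longleftrightarrow> real i - 1 < real N * x \<and> real N * x \<le> real i"
      using False Np unfolding cb_I_def by (auto simp: field_simps)
    also have "\<dots> \<longleftrightarrow> \<lceil>real N * x\<rceil> = int i"
      by (simp add: ceiling_eq_iff) 
    finally show ?thesis using False i by auto
  qed
qed

lemma cb_same: "N \<ge> 1 \<Longrightarrow> 0 \<le> x \<Longrightarrow> x \<le> 1 \<Longrightarrow> 0 \<le> x' \<Longrightarrow> x' \<le> 1 \<Longrightarrow>
  max 1 \<lceil>real N * x\<rceil> = max 1 \<lceil>real N * x'\<rceil> \<Longrightarrow> cb_kernel \<mu> N x y = cb_kernel \<mu> N x' y"
  unfolding cb_kernel_def
  by (intro arg_cong2[where f="(*)"] refl sum.cong) (auto simp: indicator_def cell)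

lemma ceil_sep: "0 \<le> (a::real) \<Longrightarrow> a \<le> b \<Longrightarrow> max 1 \<lceil>a\<rceil> \<noteq> max 1 \<lceil>b\<rceil> \<Longrightarrow>
   \<exists>k::int. k \<ge> 1 \<and> a \<le> real_of_int k \<and> real_of_int k < b"
proof -
  assume ab: "0 \<le> a" "a \<le> b" and ne: "max 1 \<lceil>a\<rceil> \<noteq> max 1 \<lceil>b\<rceil>"
  define k where "k = max 1 \<lceil>a\<rceil>"
  have "a \<le> real_of_int k" unfolding k_def by (smt (verit) le_of_int_ceiling of_int_le_iff max.cobounded2)
  moreover have "real_of_int k < b"
  proof (rule ccontr)
    assume "\<not> real_of_int k < b"
    then have "\<lceil>b\<rceil> \<le> k" by (simp add: ceiling_le_iff)
    moreover have "\<lceil>a\<rceil> \<le> \<lceil>b\<rceil>" using ab by (simp add: ceiling_mono)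
    ultimately show False using ne unfolding k_def by linarith
  qed
  ultimately show ?thesis by (intro exI[of _ k]) (simp add: k_def)
qed

lemma two_grid:
  assumes M: "M \<ge> 1" and x: "0 \<le> x" "x \<le> x'" "x' \<le> 1"
    and d: "x' - x < 1 / (real M * (real M + 1))"
  shows "max 1 \<lceil>real M * x\<rceil> = max 1 \<lceil>real M * x'\<rceil> \<or>
         max 1 \<lceil>real (M+1) * x\<rceil> = max 1 \<lceil>real (M+1) * x'\<rceil>"
proof (rule ccontr)
  assume "\<not> ?thesis"
  then have n1: "max 1 \<lceil>real M * x\<rceil> \<noteq> max 1 \<lceil>real M * x'\<rceil>"
    and n2: "max 1 \<lceil>real (M+1) * x\<rceil> \<noteq> max 1 \<lceil>real (M+1) * x'\<rceil>" by auto
  have Mp: "real M > 0" using M by simp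
  obtain k :: int where k: "k \<ge> 1" "real M * x \<le> k" "k < real M * x'"
    using ceil_sep[OF _ _ n1] x Mp by (auto intro: mult_left_mono)
  obtain l :: int where l: "l \<ge> 1" "real (M+1) * x \<le> l" "l < real (M+1) * x'"
    using ceil_sep[OF _ _ n2] x Mp by (auto intro: mult_left_mono)
  have Pp: "real M * (real M + 1) > 0" using Mp by simp
  have "real M * (real M + 1) * (x' - x) < real M * (real M + 1) * (1 / (real M * (real M + 1)))"
    using mult_strict_left_mono[OF d Pp] .
  then have dd: "real M * (real M + 1) * (x' - x) < 1" using Pp M by (simp split: if_splits)
  have Q: "real M + 1 > 0" by simp
  have e1: "k * (real M + 1) < real M * x' * (real M + 1)"
    by (rule mult_strict_right_mono[OF k(3) Q])
  have e2: "real M * x * (real M + 1) \<le> l * real M"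
  proof -
    have "(real (M+1) * x) * real M \<le> l * real M" by (rule mult_right_mono[OF l(2)]) simp
    then show ?thesis by (simp add: algebra_simps)
  qed
  have e3: "l * real M < real M * x' * (real M + 1)"
  proof -
    have "l * real M < (real (M+1) * x') * real M" by (rule mult_strict_right_mono[OF l(3) Mp])
    then show ?thesis by (simp add: algebra_simps)
  qed
  have e4: "real M * x * (real M + 1) \<le> k * (real M + 1)"
    by (rule mult_right_mono[OF k(2)]) simp
  have dd': "real M * x' * (real M + 1) - real M * x * (real M + 1) < 1"
    using dd by (simp add: algebra_simps)
  have "\<bar>real_of_int k * (real M + 1) - real_of_int l * real M\<bar> < 1"
    using e1 e2 e3 e4 dd' by linarith
  then have "\<bar>real_of_int (k * (int M + 1) - l * int M)\<bar> < 1" by simp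
  then have eq: "k * (int M + 1) = l * int M" by linarith
  have kM: "k < int M"
  proof -
    have "real M * x' \<le> real M" using x Mp by simp
    then show ?thesis using k(3) by linarith
  qed
  have "k = (l - k) * int M" using eq by (simp add: algebra_simps)
  have "l - k \<le> 0 \<or> l - k \<ge> 1" by linarith
  then show False
  proof
    assume "l - k \<le> 0"
    then have "(l - k) * int M \<le> 0" by (simp add: mult_nonpos_nonneg)
    then show False using \<open>k = (l - k) * int M\<close> k(1) by linarith
  next
    assume "l - k \<ge> 1"
    then have "(l - k) * int M \<ge> 1 * int M" by (intro mult_right_mono) auto
    then show False using \<open>k = (l - k) * int M\<close> kM by linarith
  qed
qed

lemma F_bnd:
  assumes "markov_kernel_of \<mu> K" "x \<in> {0..1}"
  shows "\<bar>measure (K x) A\<bar> \<le> 1"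
proof -
  have s: "sets (K x) = sets unit_borel" and e: "emeasure (K x) {0..1} = 1"
    using assms unfolding markov_kernel_of_def by auto
  have "space (K x) = {0..1}" using sets_eq_imp_space_eq[OF s] by (simp add: space_restrict_space)
  then have fm: "finite_measure (K x)" using e by (intro finite_measureI) simp
  have "measure (K x) A \<le> measure (K x) (space (K x))" by (rule finite_measure.bounded_measure[OF fm])
  also have "\<dots> = 1" using e \<open>space (K x) = {0..1}\<close> by (simp add: measure_def)
  finally show ?thesis by simp
qed

theorem proposition3p6:
  fixes \<mu> :: "(real \<times> real) measure" and K :: "real \<Rightarrow> real measure"
  assumes "doubly_stochastic \<mu>"
    and "markov_kernel_of \<mu> K"
    and "\<not> continuous_on ({0..1} \<times> {0..1}) (\<lambda>(x, y). measure (K x) {0..y})"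
  shows "\<not> (cb_Delta \<mu> K \<longlonglongrightarrow> 0)"
proof
  assume lim: "cb_Delta \<mu> K \<longlonglongrightarrow> 0"
  define S where "S = ({0..1} \<times> {0..1} :: (real \<times> real) set)"
  define F where "F = (\<lambda>x y. measure (K x) {0..y})"
  define T where "T = (\<lambda>N p. \<bar>cb_kernel \<mu> N (fst p) (snd p) - measure (K (fst p)) {0..snd p}\<bar>)"
  have bdd: "bdd_above (T N ` S)" for N
  proof (rule bdd_aboveI2)
    fix p assume p: "p \<in> S"
    have "\<bar>cb_kernel \<mu> N (fst p) (snd p)\<bar> \<le> (real N)\<^sup>2 * (\<Sum>i = 1..N. \<Sum>j = 1..N. measure \<mu> (cb_Q N i j))"
      using p by (intro cb_bnd) (auto simp: S_def)
    moreover have "\<bar>measure (K (fst p)) {0..snd p}\<bar> \<le> 1"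
      using p by (intro F_bnd[OF assms(2)]) (auto simp: S_def)
    ultimately show "T N p \<le> (real N)\<^sup>2 * (\<Sum>i = 1..N. \<Sum>j = 1..N. measure \<mu> (cb_Q N i j)) + 1"
      unfolding T_def by linarith
  qed
  have le: "\<bar>cb_kernel \<mu> N x y - F x y\<bar> \<le> cb_Delta \<mu> K N" if "x \<in> {0..1}" "y \<in> {0..1}" for N x y
  proof -
    have "T N (x, y) \<le> (SUP p\<in>S. T N p)"
      using that by (intro cSUP_upper bdd) (auto simp: S_def)
    also have "(SUP p\<in>S. T N p) = cb_Delta \<mu> K N" by (simp add: cb_Delta_def T_def S_def)
    finally have "T N (x, y) \<le> cb_Delta \<mu> K N" .
    then show ?thesis by (simp add: T_def F_def)
  qed
  have "continuous_on S (\<lambda>(x, y). F x y)"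
    unfolding continuous_on_iff
  proof (intro ballI allI impI)
    fix p :: "real \<times> real" and e :: real
    assume p: "p \<in> S" and e: "0 < e"
    obtain x0 y0 where p0: "p = (x0, y0)" by (cases p)
    have x0: "x0 \<in> {0..1}" and y0: "y0 \<in> {0..1}" using p p0 by (auto simp: S_def)
    obtain M0 where M0: "\<And>N. N \<ge> M0 \<Longrightarrow> norm (cb_Delta \<mu> K N - 0) < e / 5"
      using lim e unfolding LIMSEQ_iff by (metis divide_pos_pos zero_less_numeral)
    define M where "M = max 1 M0"
    have M1: "M \<ge> 1" unfolding M_def by simp
    have key: "\<bar>cb_kernel \<mu> N x y - F x y\<bar> < e / 5" if kN: "N \<ge> M" and kx: "x \<in> {0..1}" and ky: "y \<in> {0..1}" for N x y
    proof -
      have "cb_Delta \<mu> K N < e / 5" using M0[of N] kN unfolding M_def by auto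
      then show ?thesis using le[OF kx ky, of N] by linarith
    qed
    have sameA0: "\<bar>F x y - F x' y\<bar> < 2 * e / 5"
      if hh: "0 \<le> x" "x \<le> x'" "x' \<le> 1" "x' - x < 1 / (real M * (real M + 1))" "y \<in> {0..1}" for x x' y
    proof -
      obtain N where N: "N \<ge> M" "max 1 \<lceil>real N * x\<rceil> = max 1 \<lceil>real N * x'\<rceil>"
        using two_grid[OF M1 hh(1-4)] by (metis le_add1 order_refl)
      have "cb_kernel \<mu> N x y = cb_kernel \<mu> N x' y"
        using N M1 hh by (intro cb_same) auto
      moreover have "\<bar>cb_kernel \<mu> N x y - F x y\<bar> < e / 5" using key N hh by auto
      moreover have "\<bar>cb_kernel \<mu> N x' y - F x' y\<bar> < e / 5" using key N hh by auto
      ultimately show ?thesis by linarith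
    qed
    have sameA: "\<bar>F x y - F x' y\<bar> < 2 * e / 5"
      if "x \<in> {0..1}" "x' \<in> {0..1}" "\<bar>x' - x\<bar> < 1 / (real M * (real M + 1))" "y \<in> {0..1}" for x x' y
    proof (cases "x \<le> x'")
      case True then show ?thesis using sameA0[of x x' y] that by auto
    next
      case False then show ?thesis using sameA0[of x' x y] that by (auto simp: abs_minus_commute)
    qed
    obtain d2 where d2: "d2 > 0" "\<And>y. dist y y0 < d2 \<Longrightarrow> dist (cb_kernel \<mu> M x0 y) (cb_kernel \<mu> M x0 y0) < e / 5"
      using cb_cont[of \<mu> M x0] e unfolding continuous_on_iff
      by (metis UNIV_I divide_pos_pos zero_less_numeral)
    define d where "d = min (1 / (real M * (real M + 1))) d2"
    have dpos: "d > 0" using M1 d2(1) unfolding d_def by simp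
    show "\<exists>d>0. \<forall>q\<in>S. dist q p < d \<longrightarrow> dist ((\<lambda>(x, y). F x y) q) ((\<lambda>(x, y). F x y) p) < e"
    proof (intro exI[of _ d] conjI ballI impI dpos)
      fix q assume q: "q \<in> S" "dist q p < d"
      obtain x y where q0: "q = (x, y)" by (cases q)
      have x: "x \<in> {0..1}" and y: "y \<in> {0..1}" using q q0 by (auto simp: S_def)
      have dx: "\<bar>x0 - x\<bar> < 1 / (real M * (real M + 1))"
        using dist_fst_le[of q p] q(2) unfolding d_def q0 p0 by (simp add: dist_real_def abs_minus_commute)
      have dy: "dist y y0 < d2"
        using dist_snd_le[of q p] q(2) unfolding d_def q0 p0 by simp
      have a1: "\<bar>F x y - F x0 y\<bar> < 2 * e / 5" using sameA[OF x x0 dx y] .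
      have a2: "\<bar>cb_kernel \<mu> M x0 y - F x0 y\<bar> < e / 5" using key[OF _ x0 y] by simp
      have a3: "\<bar>cb_kernel \<mu> M x0 y - cb_kernel \<mu> M x0 y0\<bar> < e / 5" using d2(2)[OF dy] by (simp add: dist_real_def)
      have a4: "\<bar>cb_kernel \<mu> M x0 y0 - F x0 y0\<bar> < e / 5" using key[OF _ x0 y0] by simp
      have "\<bar>F x y - F x0 y0\<bar> < e" using a1 a2 a3 a4 by linarith
      then show "dist ((\<lambda>(x, y). F x y) q) ((\<lambda>(x, y). F x y) p) < e"
        unfolding q0 p0 by (simp add: dist_real_def)
    qed
  qed
  then show False using assms(3) unfolding S_def F_def by simp
qed

end
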